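(* Let $0<\alpha<1/2$. For every real $2\times 2$ matrix $M$ we have $\sigma_2(D_1M)=\sigma_2(D_2M)$. Moreover $\sigma_2(D_1D_2D_2)=\sigma_2(D_2D_2D_2)>1$, and more generally $\sigma_2(D_1D_2^m)\ge\sigma_2(D_2^3)>1$ for every $m=2+3k$ with $k\ge 1$ an integer.
   Context: For $0<\alpha<1$ let $D_1=\begin{pmatrix}0&1\\ 2(1-\alpha)&2\alpha\end{pmatrix}$ and $D_2=\begin{pmatrix}0&1\\ -2(1-\alpha)&-2\alpha\end{pmatrix}$ (these are the derivative matrices of $(x,y)\mapsto(y,\tau(\alpha y+(1-\alpha)x))$, $\tau$ the symmetric tent map, on the regions $\alpha y+(1-\alpha)x<1/2$ and $>1/2$ respectively). For a real $2\times2$ matrix $B$, $\sigma_2(B)$ denotes its smaller singular value, i.e. the square root of the smaller eigenvalue of $B^TB$. *)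

theory Defs
  imports "HOL-Analysis.Analysis"
begin

definition mat2 :: "real \<Rightarrow> real \<Rightarrow> real \<Rightarrow> real \<Rightarrow> real^2^2" where
  "mat2 a b c d = (\<chi> i j. if i = 1 then (if j = 1 then a else b) else (if j = 1 then c else d))"

definition D1 :: "real \<Rightarrow> real^2^2" where
  "D1 \<alpha> = mat2 0 1 (2 * (1 - \<alpha>)) (2 * \<alpha>)"

definition D2 :: "real \<Rightarrow> real^2^2" where
  "D2 \<alpha> = mat2 0 1 (- 2 * (1 - \<alpha>)) (- 2 * \<alpha>)"

fun matpow :: "real^2^2 \<Rightarrow> nat \<Rightarrow> real^2^2" where
  "matpow M 0 = mat 1"
| "matpow M (Suc n) = M ** matpow M n"

definition sigma2 :: "real^2^2 \<Rightarrow> real" where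
  "sigma2 B = sqrt (Min {l. \<exists>v. v \<noteq> 0 \<and> (transpose B ** B) *v v = l *\<^sub>R v})"

end

theory Submission
  imports Defs
begin

definition pp :: "real^2^2 \<Rightarrow> real" where "pp B = (B$1$1)^2 + (B$2$1)^2"
definition qq :: "real^2^2 \<Rightarrow> real" where "qq B = B$1$1*B$1$2 + B$2$1*B$2$2"
definition rr :: "real^2^2 \<Rightarrow> real" where "rr B = (B$1$2)^2 + (B$2$2)^2"

lemma PB1: "((transpose B ** B) *v v)$1 = pp B * v$1 + qq B * v$2"
  by (simp add: matrix_vector_mult_def matrix_matrix_mult_def transpose_def sum_2 pp_def qq_def
      power2_eq_square algebra_simps)
lemma PB2: "((transpose B ** B) *v v)$2 = qq B * v$1 + rr B * v$2"
  by (simp add: matrix_vector_mult_def matrix_matrix_mult_def transpose_def sum_2 rr_def qq_def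
      power2_eq_square algebra_simps)

lemma vec2_eq: "(v::real^2) = w \<longleftrightarrow> v$1 = w$1 \<and> v$2 = w$2"
  by (simp add: vec_eq_iff forall_2)

definition SS :: "real^2^2 \<Rightarrow> real set" where
  "SS B = {l. \<exists>v. v \<noteq> 0 \<and> (transpose B ** B) *v v = l *\<^sub>R v}"

lemma SS_iff: "l \<in> SS B \<longleftrightarrow> (pp B - l) * (rr B - l) = (qq B)^2"
proof
  assume "l \<in> SS B"
  then obtain v where v: "v \<noteq> 0" "(transpose B ** B) *v v = l *\<^sub>R v" unfolding SS_def by blast
  then have e1: "(pp B - l) * v$1 + qq B * v$2 = 0" and e2: "qq B * v$1 + (rr B - l) * v$2 = 0"
    using PB1[of B v] PB2[of B v] by (auto simp: vec2_eq algebra_simps)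
  have nz: "v$1 \<noteq> 0 \<or> v$2 \<noteq> 0" using v(1) by (auto simp: vec2_eq)
  have "((pp B - l) * (rr B - l) - (qq B)^2) * v$1 = (rr B - l) * ((pp B - l) * v$1 + qq B * v$2) - qq B * (qq B * v$1 + (rr B - l) * v$2)"
    by (simp add: algebra_simps power2_eq_square)
  then have "((pp B - l) * (rr B - l) - (qq B)^2) * v$1 = 0" using e1 e2 by simp
  moreover have "((pp B - l) * (rr B - l) - (qq B)^2) * v$2 = (pp B - l) * (qq B * v$1 + (rr B - l) * v$2) - qq B * ((pp B - l) * v$1 + qq B * v$2)"
    by (simp add: algebra_simps power2_eq_square)
  then have "((pp B - l) * (rr B - l) - (qq B)^2) * v$2 = 0" using e1 e2 by simp
  ultimately show "(pp B - l) * (rr B - l) = (qq B)^2" using nz by auto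
next
  assume h: "(pp B - l) * (rr B - l) = (qq B)^2"
  define a where "a = pp B - l"
  define c where "c = rr B - l"
  define q where "q = qq B"
  have h': "a * c = q^2" using h by (simp add: a_def c_def q_def)
  obtain x y where xy: "x \<noteq> 0 \<or> y \<noteq> 0" "a * x + q * y = 0" "q * x + c * y = 0"
  proof (cases "a = 0 \<and> q = 0")
    case True
    show ?thesis
    proof (cases "c = 0")
      case True then show ?thesis using \<open>a = 0 \<and> q = 0\<close> that[of 1 0] by auto
    next
      case False then show ?thesis using \<open>a = 0 \<and> q = 0\<close> that[of c 0] by auto
    qed
  next
    case False
    show ?thesis
      apply (rule that[of q "-a"])
      using False h' by (auto simp: algebra_simps power2_eq_square)
  qed
  let ?v = "vector [x, y] :: real^2"
  have "?v \<noteq> 0" using xy(1) by (auto simp: vec2_eq)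
  moreover have "(transpose B ** B) *v ?v = l *\<^sub>R ?v"
    using xy PB1[of B ?v] PB2[of B ?v] by (simp add: vec2_eq a_def c_def q_def algebra_simps)
  ultimately show "l \<in> SS B" unfolding SS_def by blast
qed

lemma mat2_eq: "(A::real^2^2) = B \<longleftrightarrow> A$1$1 = B$1$1 \<and> A$1$2 = B$1$2 \<and> A$2$1 = B$2$1 \<and> A$2$2 = B$2$2"
  by (simp add: vec_eq_iff forall_2)

lemma mat2_entries[simp]: "mat2 a b c d $1$1 = a" "mat2 a b c d $1$2 = b" "mat2 a b c d $2$1 = c" "mat2 a b c d $2$2 = d"
  by (simp_all add: mat2_def)

lemma mult_entries: "(A ** B)$1$1 = A$1$1*B$1$1 + A$1$2*B$2$1" "(A ** B)$1$2 = A$1$1*B$1$2 + A$1$2*B$2$2"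
   "(A ** B)$2$1 = A$2$1*B$1$1 + A$2$2*B$2$1" "(A ** B)$2$2 = A$2$1*B$1$2 + A$2$2*B$2$2"
  for A B :: "real^2^2"
  by (simp_all add: matrix_matrix_mult_def sum_2)

definition disc :: "real^2^2 \<Rightarrow> real" where "disc B = (pp B - rr B)^2 + 4 * (qq B)^2"
definition mm :: "real^2^2 \<Rightarrow> real" where "mm B = (pp B + rr B - sqrt (disc B)) / 2"
definition MM :: "real^2^2 \<Rightarrow> real" where "MM B = (pp B + rr B + sqrt (disc B)) / 2"

lemma disc_nn: "disc B \<ge> 0" unfolding disc_def by (intro add_nonneg_nonneg) auto

lemma quad_fact:
  fixes p r q s l :: real
  assumes "s^2 = (p - r)^2 + 4 * q^2"
  shows "(p - l) * (r - l) - q^2 = (l - (p + r - s) / 2) * (l - (p + r + s) / 2)"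
proof -
  have "(l - (p + r - s) / 2) * (l - (p + r + s) / 2) = l^2 - l * (p + r) + ((p+r)^2 - s^2) / 4"
    by (simp add: field_simps power2_eq_square)
  also have "\<dots> = (p - l) * (r - l) - q^2" using assms by (simp add: field_simps power2_eq_square)
  finally show ?thesis by simp
qed

lemma sqrt_disc_sq: "sqrt (disc B) ^ 2 = disc B" using disc_nn by simp

lemma SS_eq: "SS B = {mm B, MM B}"
proof -
  have key: "(pp B - l) * (rr B - l) - (qq B)^2 = (l - mm B) * (l - MM B)" for l
    unfolding mm_def MM_def by (rule quad_fact) (simp add: disc_def)
  show ?thesis
  proof (rule set_eqI)
    fix l
    have "l \<in> SS B \<longleftrightarrow> (l - mm B) * (l - MM B) = 0" using SS_iff[of l B] key[of l] by linarith
    then show "l \<in> SS B \<longleftrightarrow> l \<in> {mm B, MM B}" by auto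
  qed
qed

lemma sigma2_mm: "sigma2 B = sqrt (mm B)"
proof -
  have "{l. \<exists>v. v \<noteq> 0 \<and> (transpose B ** B) *v v = l *\<^sub>R v} = {mm B, MM B}"
    using SS_eq[of B] unfolding SS_def .
  moreover have "mm B \<le> MM B" unfolding mm_def MM_def using disc_nn[of B] by simp
  ultimately show ?thesis unfolding sigma2_def by (simp add: min_def)
qed

definition QQ :: "real^2^2 \<Rightarrow> real^2 \<Rightarrow> real" where "QQ B v = ((B *v v)$1)^2 + ((B *v v)$2)^2"
definition nv :: "real^2 \<Rightarrow> real" where "nv v = (v$1)^2 + (v$2)^2"

lemma QQ_expand: "QQ B v = pp B * (v$1)^2 + 2 * qq B * v$1 * v$2 + rr B * (v$2)^2"
  by (simp add: QQ_def pp_def qq_def rr_def matrix_vector_mult_def sum_2 power2_eq_square algebra_simps)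

lemma mm_parts: "(pp B - mm B) * (rr B - mm B) = (qq B)^2" "pp B - mm B \<ge> 0" "rr B - mm B \<ge> 0"
proof -
  show e: "(pp B - mm B) * (rr B - mm B) = (qq B)^2"
    using SS_iff[of "mm B" B] SS_eq[of B] by auto
  have s: "(pp B - mm B) + (rr B - mm B) \<ge> 0" unfolding mm_def using disc_nn[of B] by simp
  have p: "(pp B - mm B) * (rr B - mm B) \<ge> 0" using e by simp
  show "pp B - mm B \<ge> 0" "rr B - mm B \<ge> 0" using s p unfolding zero_le_mult_iff by linarith+
qed

lemma rayleigh: "QQ B v \<ge> mm B * nv v"
proof -
  define a where "a = pp B - mm B"
  define c where "c = rr B - mm B"
  define q where "q = qq B"
  define x where "x = v$1"
  define y where "y = v$2"
  have ac: "a * c = q^2" "a \<ge> 0" "c \<ge> 0" using mm_parts[of B] by (auto simp: a_def c_def q_def)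
  have "a * x^2 + 2 * q * x * y + c * y^2 \<ge> 0"
  proof (cases "a = 0")
    case True
    then have "q = 0" using ac by simp
    then show ?thesis using True ac by simp
  next
    case False
    then have ap: "a > 0" using ac by simp
    have "a * (a * x^2 + 2 * q * x * y + c * y^2) = (a*x + q*y)^2"
      using ac(1) by (simp add: algebra_simps power2_eq_square)
    then have "a * (a * x^2 + 2 * q * x * y + c * y^2) \<ge> 0" by simp
    then show ?thesis using ap by (simp add: zero_le_mult_iff)
  qed
  then show ?thesis unfolding QQ_expand nv_def a_def c_def q_def x_def y_def
    by (simp add: algebra_simps)
qed

lemma rayleigh_attained: "\<exists>v. nv v > 0 \<and> QQ B v = mm B * nv v"
proof -
  define a where "a = pp B - mm B"
  define c where "c = rr B - mm B"
  define q where "q = qq B"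
  have ac: "a * c = q^2" "a \<ge> 0" "c \<ge> 0" using mm_parts[of B] by (auto simp: a_def c_def q_def)
  obtain x y where xy: "x^2 + y^2 > 0" "a * x^2 + 2 * q * x * y + c * y^2 = 0"
  proof (cases "a = 0")
    case True
    then have "q = 0" using ac by simp
    then show ?thesis using True that[of 1 0] by simp
  next
    case False
    have "a * q^2 + 2 * q * q * (-a) + c * (-a)^2 = 0" using ac(1)
      by (simp add: algebra_simps power2_eq_square)
    moreover have "q^2 + (-a)^2 > 0" using False by (simp add: add_nonneg_pos)
    ultimately show ?thesis using that[of q "-a"] by blast
  qed
  let ?v = "vector [x, y] :: real^2"
  have "nv ?v > 0" using xy(1) by (simp add: nv_def)
  moreover have "QQ B ?v = mm B * nv ?v" using xy(2) unfolding QQ_expand nv_def a_def c_def q_def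
    by (simp add: algebra_simps)
  ultimately show ?thesis by blast
qed

lemma mm_nn: "mm B \<ge> 0"
proof -
  obtain v where v: "nv v > 0" "QQ B v = mm B * nv v" using rayleigh_attained by blast
  have "QQ B v \<ge> 0" by (simp add: QQ_def)
  then show ?thesis using v by (simp add: zero_le_mult_iff)
qed

lemma QQ_mult: "QQ (A ** B) v = QQ A (B *v v)" by (simp add: QQ_def matrix_vector_mul_assoc)
lemma nv_QQ: "nv (B *v v) = QQ B v" by (simp add: QQ_def nv_def)

lemma mm_mult: "mm (A ** B) \<ge> mm A * mm B"
proof -
  obtain v where v: "nv v > 0" "QQ (A ** B) v = mm (A ** B) * nv v" using rayleigh_attained by blast
  have "mm (A ** B) * nv v = QQ A (B *v v)" using v QQ_mult by simp
  also have "\<dots> \<ge> mm A * nv (B *v v)" by (rule rayleigh)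
  also have "mm A * nv (B *v v) = mm A * QQ B v" by (simp add: nv_QQ)
  also have "mm A * QQ B v \<ge> mm A * (mm B * nv v)" by (rule mult_left_mono[OF rayleigh mm_nn])
  finally have "mm (A ** B) * nv v \<ge> (mm A * mm B) * nv v" by simp
  then show ?thesis using v(1) by simp
qed

lemma transpose_entries: "(transpose A)$i$j = A$j$i" for A :: "real^2^2"
  by (simp add: transpose_def)

lemma D2_eq: "D2 a = mat2 1 0 0 (-1) ** D1 a"
  by (simp add: mat2_eq mult_entries D1_def D2_def)

lemma S_orth: "transpose (mat2 1 0 0 (-1)) ** mat2 1 0 0 (-1) = mat 1"
  by (simp add: mat2_eq mult_entries transpose_entries mat_def)

lemma part1: "sigma2 (D1 a ** M) = sigma2 (D2 a ** M)"
proof -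
  let ?S = "mat2 1 0 0 (-1)"
  have "transpose (D2 a ** M) ** (D2 a ** M) = transpose (D1 a ** M) ** ((transpose ?S ** ?S) ** (D1 a ** M))"
    unfolding D2_eq by (simp add: matrix_transpose_mul matrix_mul_assoc)
  also have "\<dots> = transpose (D1 a ** M) ** (D1 a ** M)"
    by (simp add: matrix_mul_assoc S_orth matrix_mul_lid)
  finally show ?thesis unfolding sigma2_def by simp
qed

lemma det_fact: "pp B * rr B - (qq B)^2 = (B$1$1 * B$2$2 - B$1$2 * B$2$1)^2"
  by (simp add: pp_def rr_def qq_def power2_eq_square algebra_simps)

lemma mm_MM: "mm B + MM B = pp B + rr B" "mm B * MM B = pp B * rr B - (qq B)^2" "mm B \<le> MM B"
proof -
  show "mm B + MM B = pp B + rr B" by (simp add: mm_def MM_def field_simps)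
  show "mm B * MM B = pp B * rr B - (qq B)^2"
    using quad_fact[of "sqrt (disc B)" "pp B" "rr B" "qq B" 0] disc_nn[of B]
    by (simp add: mm_def MM_def disc_def)
  show "mm B \<le> MM B" unfolding mm_def MM_def using disc_nn[of B] by simp
qed

lemma matpow_add: "matpow M (a + b) = matpow M a ** matpow M b"
  by (induction a) (simp_all add: matrix_mul_lid matrix_mul_assoc)

lemma D2cube_gt1:
  fixes a :: real
  assumes "0 < a" "a < 1/2"
  shows "mm (D2 a ** D2 a ** D2 a) > 1"
proof -
  let ?A = "D2 a ** D2 a ** D2 a"
  have det: "?A$1$1 * ?A$2$2 - ?A$1$2 * ?A$2$1 = (2 - 2*a)^3"
    by (simp add: mult_entries D2_def power3_eq_cube algebra_simps)
  have f: "1 - (pp ?A + rr ?A) + (2 - 2*a)^6 = (2*a - 1)^3 * (-45 + 21*(2*a) - 17*(2*a)^2 - (2*a)^3)"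
    by (simp add: pp_def rr_def mult_entries D2_def power2_eq_square power3_eq_cube
        numeral_eq_Suc algebra_simps)
  have c0: "0 < (1-2*a)^3" using assms by simp
  have c3: "(2*a - 1)^3 < 0" using c0 by (simp add: power3_eq_cube algebra_simps)
  have g: "-45 + 21*(2*a) - 17*(2*a)^2 - (2*a)^3 < 0" 
  proof -
    have "0 \<le> (2*a)^2" "0 \<le> (2*a)^3" using assms by simp_all
    then show ?thesis using assms by linarith
  qed
  have fpos: "1 - (pp ?A + rr ?A) + (2 - 2*a)^6 > 0" unfolding f using c3 g
    by (simp add: mult_neg_neg)
  have d1: "(2 - 2*a)^6 > 1" using assms by (intro one_less_power) auto
  have prod: "mm ?A * MM ?A = (2 - 2*a)^6"
    using mm_MM(2)[of ?A] det_fact[of ?A] det by (simp add: power_mult[symmetric])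
  have sum: "mm ?A + MM ?A = pp ?A + rr ?A" by (rule mm_MM(1))
  have le: "mm ?A \<le> MM ?A" by (rule mm_MM(3))
  have nn: "mm ?A \<ge> 0" by (rule mm_nn)
  have key: "(1 - mm ?A) * (1 - MM ?A) > 0"
    using fpos prod sum by (simp add: algebra_simps)
  show ?thesis
  proof (rule ccontr)
    assume "\<not> mm ?A > 1"
    then have "1 - mm ?A \<ge> 0" by simp
    with key have "1 - MM ?A > 0" by (simp add: zero_less_mult_iff)
    then have "MM ?A < 1" by simp
    then have "mm ?A * MM ?A \<le> 1 * 1" using nn le by (intro mult_mono) auto
    then show False using prod d1 by simp
  qed
qed

theorem proposition6:
  fixes \<alpha> :: real
  assumes "0 < \<alpha>" and "\<alpha> < 1/2"
  shows "(\<forall>M :: real^2^2. sigma2 (D1 \<alpha> ** M) = sigma2 (D2 \<alpha> ** M))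
    \<and> sigma2 (D1 \<alpha> ** D2 \<alpha> ** D2 \<alpha>) = sigma2 (D2 \<alpha> ** D2 \<alpha> ** D2 \<alpha>)
    \<and> sigma2 (D2 \<alpha> ** D2 \<alpha> ** D2 \<alpha>) > 1
    \<and> (\<forall>k::nat. k \<ge> 1 \<longrightarrow>
         sigma2 (D1 \<alpha> ** matpow (D2 \<alpha>) (2 + 3 * k)) \<ge> sigma2 (matpow (D2 \<alpha>) 3)
         \<and> sigma2 (matpow (D2 \<alpha>) 3) > 1)"
proof -
  let ?D = "D2 \<alpha>"
  have p1: "\<forall>M :: real^2^2. sigma2 (D1 \<alpha> ** M) = sigma2 (D2 \<alpha> ** M)" using part1 by blast
  have p2: "sigma2 (D1 \<alpha> ** D2 \<alpha> ** D2 \<alpha>) = sigma2 (D2 \<alpha> ** D2 \<alpha> ** D2 \<alpha>)"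
    using part1[of \<alpha> "D2 \<alpha> ** D2 \<alpha>"] by (simp add: matrix_mul_assoc)
  have gt: "mm (?D ** ?D ** ?D) > 1" using D2cube_gt1 assms by blast
  have p3: "sigma2 (?D ** ?D ** ?D) > 1" unfolding sigma2_mm using gt by simp
  have m3: "matpow ?D 3 = ?D ** ?D ** ?D"
    by (simp add: numeral_eq_Suc matrix_mul_rid matrix_mul_assoc)
  have gt3: "mm (matpow ?D 3) > 1" using gt m3 by simp
  have ind: "j \<ge> 1 \<Longrightarrow> mm (matpow ?D (3 * j)) \<ge> mm (matpow ?D 3)" for j
  proof (induction j)
    case 0 then show ?case by simp
  next
    case (Suc j)
    show ?case
    proof (cases "j = 0")
      case True then show ?thesis by simp
    next
      case False
      then have ih: "mm (matpow ?D (3 * j)) \<ge> mm (matpow ?D 3)" using Suc by simp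
      have "matpow ?D (3 * Suc j) = matpow ?D 3 ** matpow ?D (3 * j)"
        using matpow_add[of ?D 3 "3*j"] by simp
      then have "mm (matpow ?D (3 * Suc j)) \<ge> mm (matpow ?D 3) * mm (matpow ?D (3 * j))"
        using mm_mult by simp
      moreover have "mm (matpow ?D 3) * mm (matpow ?D (3 * j)) \<ge> mm (matpow ?D 3) * 1"
        using ih gt3 by (intro mult_left_mono) auto
      ultimately show ?thesis by simp
    qed
  qed
  have p4: "sigma2 (D1 \<alpha> ** matpow ?D (2 + 3 * k)) \<ge> sigma2 (matpow ?D 3)" if "k \<ge> 1" for k
  proof -
    have "sigma2 (D1 \<alpha> ** matpow ?D (2 + 3 * k)) = sigma2 (?D ** matpow ?D (2 + 3 * k))"
      by (rule part1)
    also have "?D ** matpow ?D (2 + 3 * k) = matpow ?D (3 * Suc k)"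
      by (metis matpow.simps(2) add_Suc mult_Suc_right numeral_3_eq_3 add_Suc_shift numeral_2_eq_2 add_0)
    finally have e: "sigma2 (D1 \<alpha> ** matpow ?D (2 + 3 * k)) = sqrt (mm (matpow ?D (3 * Suc k)))"
      by (simp add: sigma2_mm)
    have "mm (matpow ?D 3) \<le> mm (matpow ?D (3 * Suc k))" by (rule ind) simp
    then have "sqrt (mm (matpow ?D 3)) \<le> sqrt (mm (matpow ?D (3 * Suc k)))" by (rule real_sqrt_le_mono)
    then show ?thesis using e sigma2_mm[of "matpow ?D 3"] by simp
  qed
  show ?thesis using p1 p2 p3 p4 p3 m3 by simp
qed

end
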